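(* Let $p\in\{1,\dots,d\}$, $\tau\in\{1,\dots,n-1\}$ and $r>0$. (1) If $c_1\in(0,\sqrt2-1)$ and $H\le(\sqrt2-1-c_1)\frac{r^2nh(\tau)}{\sqrt{2d}}$, then $$\beta(\psi_{\mathrm{lin}},\Theta_p[r],\tau)\le\sqrt e\exp\Bigl\{-c_1\frac{r^2nh(\tau)}{\sqrt{2d}}\Bigr\}.$$ (2) For $T_p>0$ let $c_2=c_2(p,\tau,r)=(1+\sqrt{2/p})^{-1}\frac{r^2nh(\tau)}{T_p\sqrt{2p}}$. Then $$\beta(\psi^p_{\mathrm{scan}},\Theta_p[r],\tau)\le\sqrt e\exp\{-(c_2-1)T_p\}.$$
   Context: Model: for integers $n\ge2$, $d\ge1$ and a fixed baseline mean $\theta\in\mathbb R^d$, we observe independent vectors $X_i=\theta+\Delta\theta_\tau\mathbf 1\{i>\tau\}+\xi_i$, $i=1,\dots,n$, with $\xi_i$ i.i.d. $\mathcal N(0,I_d)$; $\mathbf E_{\Delta\theta_\tau}$ denotes expectation when there is a jump $\Delta\theta_\tau$ at location $\tau$. $V_p^d=\{(\varepsilon_1v_1,\dots,\varepsilon_dv_d):v\in\mathbb R^d,\ \varepsilon_j\in\{0,1\},\ \sum_j\varepsilon_j=p\}$, $\Theta_p[r]=\{v\in V_p^d:\|v\|\ge r\}$, $h(\tau)=\frac\tau n(1-\frac\tau n)$. For $s\in\{1,\dots,n-1\}$, $Z_n(s)=\sqrt{\frac{s(n-s)}n}\bigl(\frac1s\sum_{i=1}^sX_i-\frac1{n-s}\sum_{i=s+1}^nX_i\bigr)$.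 $\mathcal M(d,p)$ is the family of $p$-element subsets of $\{1,\dots,d\}$; $\Pi_mv$ sets to zero the coordinates of $v$ outside $m$. $L_{\mathrm{lin}}(s)=(\|Z_n(s)\|^2-d)/\sqrt{2d}$, $L^p_{\mathrm{scan}}(s)=\max_{m\in\mathcal M(d,p)}(\|\Pi_mZ_n(s)\|^2-p)/\sqrt{2p}$; $\psi_{\mathrm{lin}}=\mathbf 1\{L_{\mathrm{lin}}(\tau)>H\}$, $\psi^p_{\mathrm{scan}}=\mathbf 1\{L^p_{\mathrm{scan}}(\tau)>T_p\}$. $\beta(\psi,\Theta_p[r],\tau)=\sup_{\Delta\theta_\tau\in\Theta_p[r]}\mathbf E_{\Delta\theta_\tau}(1-\psi)$. *)

theory Defs
  imports "HOL-Probability.Probability"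
begin

text \<open>Dimension d is CARD('d). Noise: xi i has i.i.d. N(0,1) coordinates, i = 1..n.\<close>

definition noise_space :: "nat \<Rightarrow> (nat \<Rightarrow> 'd::finite \<Rightarrow> real) measure" where
  "noise_space n = PiM {1..n} (\<lambda>_. PiM (UNIV :: 'd set) (\<lambda>_. density lborel std_normal_density))"

definition obs :: "real^'d \<Rightarrow> real^'d \<Rightarrow> nat \<Rightarrow> (nat \<Rightarrow> 'd::finite \<Rightarrow> real) \<Rightarrow> nat \<Rightarrow> real^'d" where
  "obs \<theta> \<Delta> \<tau> \<xi> i = \<theta> + (if i > \<tau> then \<Delta> else 0) + vec_lambda (\<xi> i)"

definition hfun :: "nat \<Rightarrow> nat \<Rightarrow> real" where
  "hfun n \<tau> = (real \<tau> / real n) * (1 - real \<tau> / real n)"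

definition Zn :: "nat \<Rightarrow> (nat \<Rightarrow> real^'d::finite) \<Rightarrow> nat \<Rightarrow> real^'d" where
  "Zn n X s = sqrt (real s * real (n - s) / real n) *\<^sub>R
      ((1 / real s) *\<^sub>R (\<Sum>i = 1..s. X i) - (1 / real (n - s)) *\<^sub>R (\<Sum>i = s + 1..n. X i))"

definition Vpd :: "nat \<Rightarrow> (real^'d::finite) set" where
  "Vpd p = {(\<chi> j. \<epsilon> j * v $ j) | v \<epsilon>. (\<forall>j. \<epsilon> j \<in> {0, 1}) \<and> (\<Sum>j\<in>UNIV. \<epsilon> j) = real p}"

definition Theta :: "nat \<Rightarrow> real \<Rightarrow> (real^'d::finite) set" where
  "Theta p r = {v \<in> Vpd p. norm v \<ge> r}"

definition Proj :: "'d set \<Rightarrow> real^'d::finite \<Rightarrow> real^'d" where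
  "Proj m v = (\<chi> j. if j \<in> m then v $ j else 0)"

definition Lfam :: "nat \<Rightarrow> 'd::finite set set" where
  "Lfam p = {m. card m = p}"

definition L_lin :: "nat \<Rightarrow> (nat \<Rightarrow> real^'d::finite) \<Rightarrow> nat \<Rightarrow> real" where
  "L_lin n X s = ((norm (Zn n X s))\<^sup>2 - real CARD('d)) / sqrt (2 * real CARD('d))"

definition L_scan :: "nat \<Rightarrow> nat \<Rightarrow> (nat \<Rightarrow> real^'d::finite) \<Rightarrow> nat \<Rightarrow> real" where
  "L_scan p n X s = Max ((\<lambda>m. ((norm (Proj m (Zn n X s)))\<^sup>2 - real p) / sqrt (2 * real p)) ` (Lfam p :: 'd set set))"

definition psi_lin :: "real \<Rightarrow> nat \<Rightarrow> nat \<Rightarrow> (nat \<Rightarrow> real^'d::finite) \<Rightarrow> real" where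
  "psi_lin H n \<tau> X = (if L_lin n X \<tau> > H then 1 else 0)"

definition psi_scan :: "nat \<Rightarrow> real \<Rightarrow> nat \<Rightarrow> nat \<Rightarrow> (nat \<Rightarrow> real^'d::finite) \<Rightarrow> real" where
  "psi_scan p T n \<tau> X = (if L_scan p n X \<tau> > T then 1 else 0)"

definition beta :: "nat \<Rightarrow> real^'d::finite \<Rightarrow> ((nat \<Rightarrow> real^'d) \<Rightarrow> real) \<Rightarrow> (real^'d) set \<Rightarrow> nat \<Rightarrow> real" where
  "beta n \<theta> \<psi> \<Theta> \<tau> = Sup ((\<lambda>\<Delta>. integral\<^sup>L (noise_space n) (\<lambda>\<xi>. 1 - \<psi> (obs \<theta> \<Delta> \<tau> \<xi>))) ` \<Theta>)"

end

theory Submission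
  imports Defs
begin

definition GG :: "real \<Rightarrow> real \<Rightarrow> real \<Rightarrow> real" where
  "GG \<alpha> S c = exp (- \<alpha> * c\<^sup>2 / (1 + 2 * \<alpha> * S)) / sqrt (1 + 2 * \<alpha> * S)"

lemma GG_nonneg: "\<alpha> \<ge> 0 \<Longrightarrow> S \<ge> 0 \<Longrightarrow> GG \<alpha> S c \<ge> 0"
  unfolding GG_def by (intro divide_nonneg_nonneg) auto

lemma expo_id:
  fixes \<alpha> c w y D :: real
  assumes "D = 1 + 2 * \<alpha> * w\<^sup>2" "D > 0"
  shows "- y\<^sup>2 / 2 - \<alpha> * (c + w * y)\<^sup>2 = - \<alpha> * c\<^sup>2 / D - D * (y - (- 2 * \<alpha> * c * w / D))\<^sup>2 / 2"
proof -
  have e1: "D * (y - (- 2 * \<alpha> * c * w / D))\<^sup>2 = D * y\<^sup>2 + 4 * \<alpha> * c * w * y + 4 * \<alpha>\<^sup>2 * c\<^sup>2 * w\<^sup>2 / D"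
    using assms(2) by (simp add: power2_eq_square field_simps)
  have e2: "\<alpha> * c\<^sup>2 / D + 2 * \<alpha>\<^sup>2 * c\<^sup>2 * w\<^sup>2 / D = \<alpha> * c\<^sup>2"
  proof -
    have "\<alpha> * c\<^sup>2 / D + 2 * \<alpha>\<^sup>2 * c\<^sup>2 * w\<^sup>2 / D = \<alpha> * c\<^sup>2 * D / D"
      using assms by (simp add: add_divide_distrib[symmetric] power2_eq_square algebra_simps)
    then show ?thesis using assms(2) by simp
  qed
  have "- \<alpha> * c\<^sup>2 / D - D * (y - (- 2 * \<alpha> * c * w / D))\<^sup>2 / 2 = - \<alpha> * c\<^sup>2 - D * y\<^sup>2 / 2 - 2 * \<alpha> * c * w * y"
  proof -
    have h: "4 * \<alpha>\<^sup>2 * c\<^sup>2 * w\<^sup>2 / D / 2 = 2 * \<alpha>\<^sup>2 * c\<^sup>2 * w\<^sup>2 / D" by simp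
    have h2: "(D * y\<^sup>2 + 4 * \<alpha> * c * w * y + 4 * \<alpha>\<^sup>2 * c\<^sup>2 * w\<^sup>2 / D) / 2 = D * y\<^sup>2 / 2 + 2 * \<alpha> * c * w * y + 4 * \<alpha>\<^sup>2 * c\<^sup>2 * w\<^sup>2 / D / 2"
      by (simp add: add_divide_distrib)
    show ?thesis unfolding e1 h2 h using e2 by linarith
  qed
  also have "\<dots> = - y\<^sup>2 / 2 - \<alpha> * (c + w * y)\<^sup>2" unfolding assms(1) by (simp add: power2_eq_square algebra_simps)
  finally show ?thesis by simp
qed

lemma gauss1:
  fixes \<alpha> c w :: real
  assumes "\<alpha> \<ge> 0"
  shows "(\<integral>\<^sup>+y. ennreal (exp (- \<alpha> * (c + w * y)\<^sup>2)) \<partial>density lborel std_normal_density)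
     = ennreal (GG \<alpha> (w\<^sup>2) c)"
proof -
  define D where "D = 1 + 2 * \<alpha> * w\<^sup>2"
  have D: "D > 0" unfolding D_def using assms by (simp add: add_pos_nonneg)
  define m where "m = - 2 * \<alpha> * c * w / D"
  define \<sigma> where "\<sigma> = 1 / sqrt D"
  have sp: "\<sigma> > 0" using D unfolding \<sigma>_def by simp
  have pw: "std_normal_density y * exp (- \<alpha> * (c + w * y)\<^sup>2) = GG \<alpha> (w\<^sup>2) c * normal_density m \<sigma> y" for y
  proof -
    have "std_normal_density y * exp (- \<alpha> * (c + w * y)\<^sup>2) = (1 / sqrt (2 * pi)) * exp (- y\<^sup>2 / 2 - \<alpha> * (c + w * y)\<^sup>2)"
      by (simp add: std_normal_density_def exp_add[symmetric])
    also have "\<dots> = (1 / sqrt (2 * pi)) * exp (- \<alpha> * c\<^sup>2 / D - (y - m)\<^sup>2 / (2 * \<sigma>\<^sup>2))"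
      using expo_id[OF D_def D, of y c] unfolding m_def \<sigma>_def using D by (simp add: power_divide)
    also have "\<dots> = (exp (- \<alpha> * c\<^sup>2 / D) / sqrt D) * (sqrt D / sqrt (2 * pi) * exp (- (y - m)\<^sup>2 / (2 * \<sigma>\<^sup>2)))"
      using D by (simp add: exp_add[symmetric])
    also have "sqrt D / sqrt (2 * pi) = 1 / sqrt (2 * pi * \<sigma>\<^sup>2)"
      using D unfolding \<sigma>_def by (simp add: real_sqrt_mult real_sqrt_divide power_divide field_simps)
    also have "(exp (- \<alpha> * c\<^sup>2 / D) / sqrt D) = GG \<alpha> (w\<^sup>2) c" unfolding GG_def D_def ..
    finally show ?thesis unfolding normal_density_def by simp
  qed
  have "(\<integral>\<^sup>+y. ennreal (exp (- \<alpha> * (c + w * y)\<^sup>2)) \<partial>density lborel std_normal_density)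
      = (\<integral>\<^sup>+y. ennreal (std_normal_density y) * ennreal (exp (- \<alpha> * (c + w * y)\<^sup>2)) \<partial>lborel)"
    by (subst nn_integral_density) auto
  also have "\<dots> = (\<integral>\<^sup>+y. ennreal (GG \<alpha> (w\<^sup>2) c) * ennreal (normal_density m \<sigma> y) \<partial>lborel)"
  proof (intro nn_integral_cong)
    fix y
    have g: "GG \<alpha> (w\<^sup>2) c \<ge> 0" using assms by (intro GG_nonneg) auto
    have "ennreal (std_normal_density y) * ennreal (exp (- \<alpha> * (c + w * y)\<^sup>2)) = ennreal (std_normal_density y * exp (- \<alpha> * (c + w * y)\<^sup>2))"
      by (simp add: ennreal_mult normal_density_nonneg)
    also have "\<dots> = ennreal (GG \<alpha> (w\<^sup>2) c) * ennreal (normal_density m \<sigma> y)"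
      unfolding pw using g by (simp add: ennreal_mult normal_density_nonneg)
    finally show "ennreal (std_normal_density y) * ennreal (exp (- \<alpha> * (c + w * y)\<^sup>2)) = ennreal (GG \<alpha> (w\<^sup>2) c) * ennreal (normal_density m \<sigma> y)" .
  qed
  also have "\<dots> = ennreal (GG \<alpha> (w\<^sup>2) c) * (\<integral>\<^sup>+y. ennreal (normal_density m \<sigma> y) \<partial>lborel)"
    by (subst nn_integral_cmult) auto
  also have "(\<integral>\<^sup>+y. ennreal (normal_density m \<sigma> y) \<partial>lborel) = 1"
    using sp by (subst nn_integral_eq_integral) (auto simp: normal_density_nonneg)
  finally show ?thesis by simp
qed

abbreviation NN :: "real measure" where "NN \<equiv> density lborel std_normal_density"

lemma prob_NN: "prob_space NN" by (rule prob_space_normal_density) simp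

lemma prob_NNd: "prob_space (PiM (UNIV::'d::finite set) (\<lambda>_. NN))"
  by (intro prob_space_PiM prob_NN)

lemma meas_kj: "k \<in> I \<Longrightarrow> j \<in> J \<Longrightarrow> (\<lambda>x. x k j) \<in> borel_measurable (PiM I (\<lambda>_. PiM J (\<lambda>_. borel)))"
  using measurable_compose[OF measurable_component_singleton[of k I "\<lambda>_. PiM J (\<lambda>_. borel)"] measurable_component_singleton[of j J "\<lambda>_. borel"]] by simp

lemma GG_step:
  assumes "a \<ge> 0" "S \<ge> 0"
  shows "(1 / sqrt (1 + 2 * a * w\<^sup>2)) * GG (a / (1 + 2 * a * w\<^sup>2)) S c = GG a (w\<^sup>2 + S) c"
proof -
  define A where "A = 1 + 2 * a * w\<^sup>2"
  have A: "A > 0" unfolding A_def using assms by (simp add: add_pos_nonneg)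
  have e1: "1 + 2 * (a / A) * S = (1 + 2 * a * (w\<^sup>2 + S)) / A" using A unfolding A_def by (simp add: field_simps)
  have B: "1 + 2 * a * (w\<^sup>2 + S) > 0" using assms by (simp add: add_pos_nonneg)
  have e2: "(a / A) * c\<^sup>2 / (1 + 2 * (a / A) * S) = a * c\<^sup>2 / (1 + 2 * a * (w\<^sup>2 + S))"
    unfolding e1 using A B by (simp add: field_simps)
  have e3: "sqrt A * sqrt (1 + 2 * (a / A) * S) = sqrt (1 + 2 * a * (w\<^sup>2 + S))"
    unfolding e1 using A B by (simp add: real_sqrt_divide)
  have "(1 / sqrt A) * GG (a / A) S c = exp (- ((a / A) * c\<^sup>2 / (1 + 2 * (a / A) * S))) / (sqrt A * sqrt (1 + 2 * (a / A) * S))"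
    unfolding GG_def by simp
  also have "\<dots> = GG a (w\<^sup>2 + S) c" unfolding e2 e3 GG_def by simp
  finally show ?thesis unfolding A_def .
qed

lemma gaussI:
  fixes \<alpha> c :: "'d::finite \<Rightarrow> real" and w :: "nat \<Rightarrow> real"
  assumes "finite I" "\<forall>j. \<alpha> j \<ge> 0"
  shows "(\<integral>\<^sup>+\<xi>. (\<Prod>j\<in>UNIV. ennreal (exp (- \<alpha> j * (c j + (\<Sum>i\<in>I. w i * \<xi> i j))\<^sup>2))) \<partial>PiM I (\<lambda>_. PiM (UNIV::'d set) (\<lambda>_. NN)))
     = (\<Prod>j\<in>UNIV. ennreal (GG (\<alpha> j) (\<Sum>i\<in>I. (w i)\<^sup>2) (c j)))"
  using assms
proof (induction I arbitrary: \<alpha> rule: finite_induct)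
  case empty
  interpret product_sigma_finite "\<lambda>_::nat. PiM (UNIV::'d set) (\<lambda>_. NN)"
    by (simp add: product_sigma_finite_def prob_NNd prob_NN prob_space_imp_sigma_finite)
  show ?case by (subst nn_integral_empty) (auto simp: GG_def)
next
  case (insert i I)
  interpret P: product_sigma_finite "\<lambda>_::nat. PiM (UNIV::'d set) (\<lambda>_. NN)"
    by (simp add: product_sigma_finite_def prob_NNd prob_NN prob_space_imp_sigma_finite)
  interpret Q: product_sigma_finite "\<lambda>_::'d. NN"
    by (simp add: product_sigma_finite_def prob_NNd prob_NN prob_space_imp_sigma_finite)
  define A where "A j = 1 + 2 * \<alpha> j * (w i)\<^sup>2" for j
  define \<alpha>' where "\<alpha>' j = \<alpha> j / A j" for j
  have Apos: "A j > 0" for j unfolding A_def using insert.prems by (simp add: add_pos_nonneg)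
  have a'nn: "\<forall>j. \<alpha>' j \<ge> 0" unfolding \<alpha>'_def using Apos insert.prems by (simp add: less_imp_le)
  have meas: "(\<lambda>\<xi>. \<Prod>j\<in>UNIV. ennreal (exp (- \<alpha> j * (c j + (\<Sum>k\<in>insert i I. w k * \<xi> k j))\<^sup>2)))
      \<in> borel_measurable (PiM (insert i I) (\<lambda>_. PiM (UNIV::'d set) (\<lambda>_. NN)))"
    apply measurable
    apply (rule meas_kj)
    apply auto
    done
  have inner: "(\<integral>\<^sup>+y. (\<Prod>j\<in>UNIV. ennreal (exp (- \<alpha> j * (c j + (\<Sum>k\<in>insert i I. w k * (x(i := y)) k j))\<^sup>2))) \<partial>PiM UNIV (\<lambda>_. NN))
     = ennreal (\<Prod>j\<in>UNIV. 1 / sqrt (A j)) * (\<Prod>j\<in>UNIV. ennreal (exp (- \<alpha>' j * (c j + (\<Sum>k\<in>I. w k * x k j))\<^sup>2)))" for x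
  proof -
    have "(\<integral>\<^sup>+y. (\<Prod>j\<in>UNIV. ennreal (exp (- \<alpha> j * (c j + (\<Sum>k\<in>insert i I. w k * (x(i := y)) k j))\<^sup>2))) \<partial>PiM UNIV (\<lambda>_. NN))
      = (\<integral>\<^sup>+y. (\<Prod>j\<in>UNIV. (\<lambda>j z. ennreal (exp (- \<alpha> j * ((c j + (\<Sum>k\<in>I. w k * x k j)) + w i * z)\<^sup>2))) j (y j)) \<partial>PiM UNIV (\<lambda>_. NN))"
    proof (intro nn_integral_cong prod.cong refl)
      fix y j
      have "(\<Sum>k\<in>I. w k * (x(i := y)) k j) = (\<Sum>k\<in>I. w k * x k j)"
        using insert.hyps by (intro sum.cong) auto
      then show "ennreal (exp (- \<alpha> j * (c j + (\<Sum>k\<in>insert i I. w k * (x(i := y)) k j))\<^sup>2)) =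
        (\<lambda>j z. ennreal (exp (- \<alpha> j * ((c j + (\<Sum>k\<in>I. w k * x k j)) + w i * z)\<^sup>2))) j (y j)"
        using insert.hyps by (simp add: algebra_simps)
    qed
    also have "\<dots> = (\<Prod>j\<in>UNIV. \<integral>\<^sup>+z. ennreal (exp (- \<alpha> j * ((c j + (\<Sum>k\<in>I. w k * x k j)) + w i * z)\<^sup>2)) \<partial>NN)"
      by (rule Q.product_nn_integral_prod) auto
    also have "\<dots> = (\<Prod>j\<in>UNIV. ennreal (GG (\<alpha> j) ((w i)\<^sup>2) (c j + (\<Sum>k\<in>I. w k * x k j))))"
      using insert.prems by (intro prod.cong refl gauss1) auto
    also have "\<dots> = (\<Prod>j\<in>UNIV. ennreal (1 / sqrt (A j)) * ennreal (exp (- \<alpha>' j * (c j + (\<Sum>k\<in>I. w k * x k j))\<^sup>2)))"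
    proof (intro prod.cong refl)
      fix j
      have "GG (\<alpha> j) ((w i)\<^sup>2) (c j + (\<Sum>k\<in>I. w k * x k j)) = (1 / sqrt (A j)) * exp (- \<alpha>' j * (c j + (\<Sum>k\<in>I. w k * x k j))\<^sup>2)"
        unfolding GG_def \<alpha>'_def A_def by simp
      then show "ennreal (GG (\<alpha> j) ((w i)\<^sup>2) (c j + (\<Sum>k\<in>I. w k * x k j))) = ennreal (1 / sqrt (A j)) * ennreal (exp (- \<alpha>' j * (c j + (\<Sum>k\<in>I. w k * x k j))\<^sup>2))"
        using Apos[of j] by (simp add: ennreal_mult[symmetric])
    qed
    also have "\<dots> = ennreal (\<Prod>j\<in>UNIV. 1 / sqrt (A j)) * (\<Prod>j\<in>UNIV. ennreal (exp (- \<alpha>' j * (c j + (\<Sum>k\<in>I. w k * x k j))\<^sup>2)))"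
      using Apos by (simp add: prod.distrib prod_ennreal less_imp_le)
    finally show ?thesis .
  qed
  have "(\<integral>\<^sup>+\<xi>. (\<Prod>j\<in>UNIV. ennreal (exp (- \<alpha> j * (c j + (\<Sum>k\<in>insert i I. w k * \<xi> k j))\<^sup>2))) \<partial>PiM (insert i I) (\<lambda>_. PiM (UNIV::'d set) (\<lambda>_. NN)))
     = (\<integral>\<^sup>+x. ennreal (\<Prod>j\<in>UNIV. 1 / sqrt (A j)) * (\<Prod>j\<in>UNIV. ennreal (exp (- \<alpha>' j * (c j + (\<Sum>k\<in>I. w k * x k j))\<^sup>2))) \<partial>PiM I (\<lambda>_. PiM (UNIV::'d set) (\<lambda>_. NN)))"
    apply (subst P.product_nn_integral_insert[OF insert.hyps meas])
    apply (rule nn_integral_cong)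
    apply (rule inner)
    done
  also have "\<dots> = ennreal (\<Prod>j\<in>UNIV. 1 / sqrt (A j)) * (\<Prod>j\<in>UNIV. ennreal (GG (\<alpha>' j) (\<Sum>k\<in>I. (w k)\<^sup>2) (c j)))"
    apply (subst nn_integral_cmult)
    subgoal
      apply measurable
      apply (rule meas_kj)
      apply auto
      done
    using insert.IH[OF a'nn] by simp
  also have "\<dots> = (\<Prod>j\<in>UNIV. ennreal (GG (\<alpha> j) (\<Sum>k\<in>insert i I. (w k)\<^sup>2) (c j)))"
  proof -
    have "ennreal (\<Prod>j\<in>UNIV. 1 / sqrt (A j)) * (\<Prod>j\<in>UNIV. ennreal (GG (\<alpha>' j) (\<Sum>k\<in>I. (w k)\<^sup>2) (c j)))
       = (\<Prod>j\<in>UNIV. ennreal (1 / sqrt (A j) * GG (\<alpha>' j) (\<Sum>k\<in>I. (w k)\<^sup>2) (c j)))"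
    proof -
      have nn: "(\<Prod>j\<in>UNIV. 1 / sqrt (A j)) \<ge> 0" "(\<Prod>j\<in>UNIV. GG (\<alpha>' j) (\<Sum>k\<in>I. (w k)\<^sup>2) (c j)) \<ge> 0"
        using Apos a'nn by (intro prod_nonneg; force intro: GG_nonneg sum_nonneg less_imp_le)+
      have e1: "(\<Prod>j\<in>UNIV. ennreal (GG (\<alpha>' j) (\<Sum>k\<in>I. (w k)\<^sup>2) (c j))) = ennreal (\<Prod>j\<in>UNIV. GG (\<alpha>' j) (\<Sum>k\<in>I. (w k)\<^sup>2) (c j))"
        using a'nn by (simp add: prod_ennreal GG_nonneg sum_nonneg)
      have e2: "(\<Prod>j\<in>UNIV. ennreal (1 / sqrt (A j) * GG (\<alpha>' j) (\<Sum>k\<in>I. (w k)\<^sup>2) (c j))) = ennreal (\<Prod>j\<in>UNIV. 1 / sqrt (A j) * GG (\<alpha>' j) (\<Sum>k\<in>I. (w k)\<^sup>2) (c j))"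
      proof (rule prod_ennreal)
        fix j
        have "GG (\<alpha>' j) (\<Sum>k\<in>I. (w k)\<^sup>2) (c j) \<ge> 0" using a'nn by (intro GG_nonneg sum_nonneg) auto
        moreover have "1 / sqrt (A j) \<ge> 0" using Apos[of j] by simp
        ultimately show "0 \<le> 1 / sqrt (A j) * GG (\<alpha>' j) (\<Sum>k\<in>I. (w k)\<^sup>2) (c j)" by (rule mult_nonneg_nonneg[rotated])
      qed
      have e3: "(\<Prod>j\<in>UNIV. 1 / sqrt (A j)) * (\<Prod>j\<in>UNIV. GG (\<alpha>' j) (\<Sum>k\<in>I. (w k)\<^sup>2) (c j))
          = (\<Prod>j\<in>UNIV. 1 / sqrt (A j) * GG (\<alpha>' j) (\<Sum>k\<in>I. (w k)\<^sup>2) (c j))"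
        by (rule prod.distrib[symmetric])
      show ?thesis unfolding e1 e2 e3[symmetric] by (rule ennreal_mult[OF nn, symmetric])
    qed
    also have "\<dots> = (\<Prod>j\<in>UNIV. ennreal (GG (\<alpha> j) (\<Sum>k\<in>insert i I. (w k)\<^sup>2) (c j)))"
    proof (intro prod.cong refl arg_cong[where f=ennreal])
      fix j
      have S: "(\<Sum>k\<in>I. (w k)\<^sup>2) \<ge> 0" by (intro sum_nonneg) auto
      have "1 / sqrt (A j) * GG (\<alpha>' j) (\<Sum>k\<in>I. (w k)\<^sup>2) (c j) = GG (\<alpha> j) ((w i)\<^sup>2 + (\<Sum>k\<in>I. (w k)\<^sup>2)) (c j)"
        unfolding \<alpha>'_def A_def using GG_step[OF _ S, of "\<alpha> j" "w i" "c j"] insert.prems by blast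
      then show "1 / sqrt (A j) * GG (\<alpha>' j) (\<Sum>k\<in>I. (w k)\<^sup>2) (c j) = GG (\<alpha> j) (\<Sum>k\<in>insert i I. (w k)\<^sup>2) (c j)"
        using insert.hyps by simp
    qed
    finally show ?thesis .
  qed
  finally show ?case .
qed

lemma ln_lower2:
  fixes x :: real assumes "x \<ge> 0"
  shows "x - x\<^sup>2 / 2 \<le> ln (1 + x)"
proof -
  let ?f = "\<lambda>y::real. ln (1 + y) - y + y\<^sup>2 / 2"
  have "?f 0 \<le> ?f x"
  proof (rule DERIV_nonneg_imp_nondecreasing[OF assms])
    fix y :: real assume y: "0 \<le> y" "y \<le> x"
    have "DERIV ?f y :> (1 / (1 + y) - 1 + y)"
      using y by (auto intro!: derivative_eq_intros simp: power2_eq_square)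
    moreover have "1 / (1 + y) - 1 + y = y\<^sup>2 / (1 + y)" using y by (simp add: field_simps power2_eq_square)
    moreover have "y\<^sup>2 / (1 + y) \<ge> 0" using y by simp
    ultimately show "\<exists>z. DERIV ?f y :> z \<and> z \<ge> 0" by auto
  qed
  then show ?thesis by simp
qed

lemma bound_ineq:
  fixes k :: nat and t A A0 s lam :: real
  assumes k: "k \<ge> 1" and A0: "0 \<le> A0" "A0 \<le> A"
    and s: "s = sqrt (2 * real k)" and lam: "lam = 1 / s"
  shows "exp (lam * t) * (exp (- lam * A / (1 + 2 * lam)) / sqrt (1 + 2 * lam) ^ k)
     \<le> exp (1 / 2 + lam * (t - real k) - A0 / (s + 2))"
proof -
  have spos: "s > 0" using s k by simp
  have lpos: "lam > 0" using spos lam by simp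
  have s2: "s\<^sup>2 = 2 * real k" using s by simp
  have "lam\<^sup>2 = 1 / (2 * real k)" using lam s2 by (simp add: power_divide)
  hence klam: "real k * lam\<^sup>2 = 1 / 2" using k by simp
  have "ln (1 + 2 * lam) \<ge> 2 * lam - (2 * lam)\<^sup>2 / 2" using ln_lower2[of "2 * lam"] lpos by simp
  hence "real k / 2 * ln (1 + 2 * lam) \<ge> real k / 2 * (2 * lam - (2 * lam)\<^sup>2 / 2)"
    by (intro mult_left_mono) auto
  moreover have "real k / 2 * (2 * lam - (2 * lam)\<^sup>2 / 2) = real k * lam - real k * lam\<^sup>2"
    by (simp add: power2_eq_square algebra_simps)
  ultimately have L: "real k / 2 * ln (1 + 2 * lam) \<ge> real k * lam - 1 / 2" using klam by simp
  have sq: "sqrt (1 + 2 * lam) ^ k = exp (real k / 2 * ln (1 + 2 * lam))"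
  proof -
    have p: "sqrt (1 + 2 * lam) > 0" using lpos by simp
    have "sqrt (1 + 2 * lam) ^ k = exp (ln (sqrt (1 + 2 * lam))) ^ k" using p by simp
    also have "\<dots> = exp (real k * ln (sqrt (1 + 2 * lam)))" by (simp add: exp_of_nat_mult)
    also have "ln (sqrt (1 + 2 * lam)) = ln (1 + 2 * lam) / 2" using lpos by (simp add: ln_sqrt)
    finally show ?thesis by simp
  qed
  have AA: "lam * A / (1 + 2 * lam) \<ge> A0 / (s + 2)"
  proof -
    have e: "1 + 2 * lam = (s + 2) / s" using lam spos by (simp add: field_simps)
    have "lam * A / (1 + 2 * lam) = A / (s + 2)" unfolding e lam using spos by (simp add: field_simps)
    moreover have "A0 / (s + 2) \<le> A / (s + 2)" using A0 spos by (simp add: divide_right_mono)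
    ultimately show ?thesis by simp
  qed
  have "exp (lam * t) * (exp (- lam * A / (1 + 2 * lam)) / sqrt (1 + 2 * lam) ^ k)
      = exp (lam * t - lam * A / (1 + 2 * lam) - real k / 2 * ln (1 + 2 * lam))"
  proof -
    have "exp (lam * t - lam * A / (1 + 2 * lam) - real k / 2 * ln (1 + 2 * lam))
       = exp (lam * t) / exp (lam * A / (1 + 2 * lam)) / exp (real k / 2 * ln (1 + 2 * lam))"
      by (simp only: exp_diff)
    moreover have "exp (- lam * A / (1 + 2 * lam)) = 1 / exp (lam * A / (1 + 2 * lam))"
      by (simp add: exp_minus inverse_eq_divide)
    ultimately show ?thesis unfolding sq by simp
  qed
  also have "\<dots> \<le> exp (1 / 2 + lam * (t - real k) - A0 / (s + 2))"
    using L AA by (simp add: algebra_simps)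
  finally show ?thesis .
qed

definition kap :: "nat \<Rightarrow> nat \<Rightarrow> real" where
  "kap n \<tau> = sqrt (real \<tau> * real (n - \<tau>) / real n)"

definition wgt :: "nat \<Rightarrow> nat \<Rightarrow> nat \<Rightarrow> real" where
  "wgt n \<tau> i = (if i \<le> \<tau> then kap n \<tau> / real \<tau> else - kap n \<tau> / real (n - \<tau>))"

lemma split_sum:
  fixes n \<tau> :: nat
  assumes "\<tau> < n"
  shows "(\<Sum>i\<in>{1..n}. f i) = (\<Sum>i\<in>{1..\<tau>}. f i) + (\<Sum>i\<in>{\<tau>+1..n}. f i :: real)"
proof -
  have "n = \<tau> + (n - \<tau>)" using assms by simp
  then have "(\<Sum>i\<in>{1..n}. f i) = (\<Sum>i\<in>{1..\<tau> + (n - \<tau>)}. f i)" by simp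
  also have "\<dots> = (\<Sum>i\<in>{1..\<tau>}. f i) + (\<Sum>i\<in>{\<tau>+1..\<tau> + (n - \<tau>)}. f i)"
    by (rule sum.ub_add_nat) simp
  finally show ?thesis using assms by simp
qed

lemma alg1: "(T::real) > 0 \<Longrightarrow> M > 0 \<Longrightarrow> k*((1/T)*(T*th + A) - (1/M)*(M*(th+D) + B)) = -k*D + (k/T*A - k/M*B)"
  by (simp add: field_simps)

lemma alg2: "(T::real) > 0 \<Longrightarrow> M > 0 \<Longrightarrow> T * (sqrt (T * M / (T + M)) / T)\<^sup>2 + M * (sqrt (T * M / (T + M)) / M)\<^sup>2 = 1"
proof -
  assume a: "T > 0" "M > 0"
  have "(sqrt (T * M / (T + M)))\<^sup>2 = T * M / (T + M)" using a by simp
  then have e: "(sqrt (T * M / (T + M)))\<^sup>2 = T * M / (T + M)" .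
  have 1: "T * (sqrt (T * M / (T + M)) / T)\<^sup>2 = M / (T + M)"
    unfolding power_divide e using a by (simp add: power2_eq_square)
  have 2: "M * (sqrt (T * M / (T + M)) / M)\<^sup>2 = T / (T + M)"
    unfolding power_divide e using a by (simp add: power2_eq_square)
  have "T * (sqrt (T * M / (T + M)) / T)\<^sup>2 + M * (sqrt (T * M / (T + M)) / M)\<^sup>2 = M / (T + M) + T / (T + M)"
    unfolding 1 2 ..
  also have "\<dots> = 1" using a by (simp add: add_divide_distrib[symmetric])
  finally show ?thesis .
qed

lemma Zobs:
  fixes \<theta> \<Delta> :: "real^'d::finite"
  assumes "1 \<le> \<tau>" "\<tau> < n"
  shows "Zn n (obs \<theta> \<Delta> \<tau> \<xi>) \<tau> $ j = - kap n \<tau> * \<Delta> $ j + (\<Sum>i\<in>{1..n}. wgt n \<tau> i * \<xi> i j)"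
proof -
  let ?X = "obs \<theta> \<Delta> \<tau> \<xi>"
  have Xj: "?X i $ j = \<theta> $ j + (if \<tau> < i then \<Delta> $ j else 0) + \<xi> i j" for i
    unfolding obs_def by simp
  have S1: "(\<Sum>i\<in>{1..\<tau>}. ?X i $ j) = real \<tau> * \<theta> $ j + (\<Sum>i\<in>{1..\<tau>}. \<xi> i j)"
  proof -
    have "(\<Sum>i\<in>{1..\<tau>}. ?X i $ j) = (\<Sum>i\<in>{1..\<tau>}. \<theta> $ j + \<xi> i j)"
      by (intro sum.cong refl) (auto simp: Xj)
    then show ?thesis by (simp add: sum.distrib)
  qed
  have S2: "(\<Sum>i\<in>{\<tau>+1..n}. ?X i $ j) = real (n - \<tau>) * (\<theta> $ j + \<Delta> $ j) + (\<Sum>i\<in>{\<tau>+1..n}. \<xi> i j)"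
  proof -
    have "(\<Sum>i\<in>{\<tau>+1..n}. ?X i $ j) = (\<Sum>i\<in>{\<tau>+1..n}. (\<theta> $ j + \<Delta> $ j) + \<xi> i j)"
      by (intro sum.cong refl) (auto simp: Xj)
    then show ?thesis using assms by (simp add: sum.distrib of_nat_diff)
  qed
  have W: "(\<Sum>i\<in>{1..n}. wgt n \<tau> i * \<xi> i j) = kap n \<tau> / real \<tau> * (\<Sum>i\<in>{1..\<tau>}. \<xi> i j) - kap n \<tau> / real (n - \<tau>) * (\<Sum>i\<in>{\<tau>+1..n}. \<xi> i j)"
  proof -
    have a: "(\<Sum>i\<in>{1..\<tau>}. wgt n \<tau> i * \<xi> i j) = (\<Sum>i\<in>{1..\<tau>}. kap n \<tau> / real \<tau> * \<xi> i j)"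
      by (intro sum.cong refl) (auto simp: wgt_def)
    have b: "(\<Sum>i\<in>{\<tau>+1..n}. wgt n \<tau> i * \<xi> i j) = (\<Sum>i\<in>{\<tau>+1..n}. - kap n \<tau> / real (n - \<tau>) * \<xi> i j)"
      by (intro sum.cong refl) (auto simp: wgt_def)
    show ?thesis unfolding split_sum[OF assms(2)] a b by (simp add: sum_distrib_left sum_negf)
  qed
  have tp: "real \<tau> > 0" "real (n - \<tau>) > 0" using assms by auto
  have "Zn n ?X \<tau> $ j = kap n \<tau> * ((1 / real \<tau>) * (\<Sum>i\<in>{1..\<tau>}. ?X i $ j) - (1 / real (n - \<tau>)) * (\<Sum>i\<in>{\<tau>+1..n}. ?X i $ j))"
    unfolding Zn_def kap_def by simp
  also have "\<dots> = - kap n \<tau> * \<Delta> $ j + (\<Sum>i\<in>{1..n}. wgt n \<tau> i * \<xi> i j)"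
    unfolding S1 S2 W using alg1[OF tp] by simp
  finally show ?thesis .
qed

lemma wgt_sq:
  assumes "1 \<le> \<tau>" "\<tau> < n"
  shows "(\<Sum>i\<in>{1..n}. (wgt n \<tau> i)\<^sup>2) = 1"
proof -
  have tp: "real \<tau> > 0" "real (n - \<tau>) > 0" "real n > 0" using assms by auto
  have k2: "(kap n \<tau>)\<^sup>2 = real \<tau> * real (n - \<tau>) / real n" unfolding kap_def using tp by simp
  have a: "(\<Sum>i\<in>{1..\<tau>}. (wgt n \<tau> i)\<^sup>2) = real \<tau> * (kap n \<tau> / real \<tau>)\<^sup>2"
  proof -
    have "(\<Sum>i\<in>{1..\<tau>}. (wgt n \<tau> i)\<^sup>2) = (\<Sum>i\<in>{1..\<tau>}. (kap n \<tau> / real \<tau>)\<^sup>2)"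
      by (intro sum.cong refl) (auto simp: wgt_def)
    then show ?thesis by simp
  qed
  have b: "(\<Sum>i\<in>{\<tau>+1..n}. (wgt n \<tau> i)\<^sup>2) = real (n - \<tau>) * (kap n \<tau> / real (n - \<tau>))\<^sup>2"
  proof -
    have "(\<Sum>i\<in>{\<tau>+1..n}. (wgt n \<tau> i)\<^sup>2) = (\<Sum>i\<in>{\<tau>+1..n}. (kap n \<tau> / real (n - \<tau>))\<^sup>2)"
      by (intro sum.cong refl) (auto simp: wgt_def power2_eq_square)
    moreover have c: "card {\<tau>+1..n} = n - \<tau>" by simp
    ultimately show ?thesis by (simp only: sum_constant c)
  qed
  have n: "real n = real \<tau> + real (n - \<tau>)" using assms by simp
  have "kap n \<tau> = sqrt (real \<tau> * real (n - \<tau>) / (real \<tau> + real (n - \<tau>)))" unfolding kap_def n[symmetric] ..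
  then show ?thesis unfolding split_sum[OF assms(2)] a b using alg2[OF tp(1,2)] by simp
qed

lemma chernoff:
  fixes \<theta> \<Delta> :: "real^'d::finite" and a :: "'d \<Rightarrow> real" and f :: "(nat \<Rightarrow> 'd \<Rightarrow> real) \<Rightarrow> real"
  assumes tau: "1 \<le> \<tau>" "\<tau> < n" and lam: "lam > 0" and a: "\<forall>j. a j \<ge> 0"
    and f: "\<And>\<xi>. 0 \<le> f \<xi>" "\<And>\<xi>. f \<xi> \<le> exp (lam * (t - (\<Sum>j\<in>UNIV. a j * (Zn n (obs \<theta> \<Delta> \<tau> \<xi>) \<tau> $ j)\<^sup>2)))"
  shows "integral\<^sup>L (noise_space n :: (nat \<Rightarrow> 'd \<Rightarrow> real) measure) f
     \<le> exp (lam * t) * (\<Prod>j\<in>UNIV. GG (lam * a j) 1 (- kap n \<tau> * \<Delta> $ j))"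
proof -
  define V where "V = exp (lam * t) * (\<Prod>j\<in>UNIV. GG (lam * a j) 1 (- kap n \<tau> * \<Delta> $ j))"
  have al: "\<forall>j. lam * a j \<ge> 0" using a lam by simp
  have GGn: "\<And>j. GG (lam * a j) 1 (- kap n \<tau> * \<Delta> $ j) \<ge> 0" using al by (intro GG_nonneg) auto
  have Vnn: "V \<ge> 0" unfolding V_def using GGn by (intro mult_nonneg_nonneg prod_nonneg) auto
  let ?c = "\<lambda>j. - kap n \<tau> * \<Delta> $ j"
  let ?w = "wgt n \<tau>"
  have pw: "ennreal (exp (lam * (t - (\<Sum>j\<in>UNIV. a j * (Zn n (obs \<theta> \<Delta> \<tau> \<xi>) \<tau> $ j)\<^sup>2))))
     = ennreal (exp (lam * t)) * (\<Prod>j\<in>UNIV. ennreal (exp (- (lam * a j) * (?c j + (\<Sum>i\<in>{1..n}. ?w i * \<xi> i j))\<^sup>2)))" for \<xi>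
  proof -
    have "lam * (t - (\<Sum>j\<in>UNIV. a j * (Zn n (obs \<theta> \<Delta> \<tau> \<xi>) \<tau> $ j)\<^sup>2))
       = lam * t + (\<Sum>j\<in>UNIV. - (lam * a j) * (?c j + (\<Sum>i\<in>{1..n}. ?w i * \<xi> i j))\<^sup>2)"
      unfolding Zobs[OF tau] by (simp add: sum_distrib_left right_diff_distrib sum_negf mult.assoc)
    then have "exp (lam * (t - (\<Sum>j\<in>UNIV. a j * (Zn n (obs \<theta> \<Delta> \<tau> \<xi>) \<tau> $ j)\<^sup>2)))
       = exp (lam * t) * (\<Prod>j\<in>UNIV. exp (- (lam * a j) * (?c j + (\<Sum>i\<in>{1..n}. ?w i * \<xi> i j))\<^sup>2))"
      by (simp add: exp_add exp_sum)
    then show ?thesis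
      by (simp only:) (subst ennreal_mult, simp, rule prod_nonneg, simp, simp add: prod_ennreal)
  qed
  have I: "(\<integral>\<^sup>+\<xi>. ennreal (exp (lam * (t - (\<Sum>j\<in>UNIV. a j * (Zn n (obs \<theta> \<Delta> \<tau> \<xi>) \<tau> $ j)\<^sup>2)))) \<partial>(noise_space n :: (nat \<Rightarrow> 'd \<Rightarrow> real) measure))
      = ennreal V"
  proof -
    have "(\<integral>\<^sup>+\<xi>. ennreal (exp (lam * (t - (\<Sum>j\<in>UNIV. a j * (Zn n (obs \<theta> \<Delta> \<tau> \<xi>) \<tau> $ j)\<^sup>2)))) \<partial>(noise_space n :: (nat \<Rightarrow> 'd \<Rightarrow> real) measure))
      = (\<integral>\<^sup>+\<xi>. ennreal (exp (lam * t)) * (\<Prod>j\<in>UNIV. ennreal (exp (- (lam * a j) * (?c j + (\<Sum>i\<in>{1..n}. ?w i * \<xi> i j))\<^sup>2))) \<partial>PiM {1..n} (\<lambda>_. PiM (UNIV::'d set) (\<lambda>_. NN)))"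
      unfolding noise_space_def pw ..
    also have "\<dots> = ennreal (exp (lam * t)) * (\<integral>\<^sup>+\<xi>. (\<Prod>j\<in>UNIV. ennreal (exp (- (lam * a j) * (?c j + (\<Sum>i\<in>{1..n}. ?w i * \<xi> i j))\<^sup>2))) \<partial>PiM {1..n} (\<lambda>_. PiM (UNIV::'d set) (\<lambda>_. NN)))"
      apply (subst nn_integral_cmult)
      subgoal
        apply measurable
        apply (rule meas_kj)
        apply auto
        done
      by simp
    also have "\<dots> = ennreal (exp (lam * t)) * (\<Prod>j\<in>UNIV. ennreal (GG (lam * a j) (\<Sum>i\<in>{1..n}. (?w i)\<^sup>2) (?c j)))"
      using gaussI[of "{1..n}" "\<lambda>j. lam * a j" ?c ?w] al by simp
    also have "\<dots> = ennreal V"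
      unfolding wgt_sq[OF tau] V_def using GGn by (simp add: ennreal_mult prod_ennreal prod_nonneg)
    finally show ?thesis .
  qed
  have le: "(\<integral>\<^sup>+\<xi>. ennreal (f \<xi>) \<partial>(noise_space n :: (nat \<Rightarrow> 'd \<Rightarrow> real) measure)) \<le> ennreal V"
    unfolding I[symmetric] by (intro nn_integral_mono) (simp add: f(2))
  show ?thesis
  proof (cases "integrable (noise_space n :: (nat \<Rightarrow> 'd \<Rightarrow> real) measure) f")
    case True
    have "ennreal (integral\<^sup>L (noise_space n :: (nat \<Rightarrow> 'd \<Rightarrow> real) measure) f) = (\<integral>\<^sup>+\<xi>. ennreal (f \<xi>) \<partial>(noise_space n :: (nat \<Rightarrow> 'd \<Rightarrow> real) measure))"
      using True f(1) by (subst nn_integral_eq_integral) auto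
    with le have "ennreal (integral\<^sup>L (noise_space n :: (nat \<Rightarrow> 'd \<Rightarrow> real) measure) f) \<le> ennreal V" by simp
    then show ?thesis unfolding V_def[symmetric] using ennreal_le_iff[OF Vnn] by blast
  next
    case False
    then show ?thesis using Vnn unfolding V_def[symmetric] by (simp add: not_integrable_integral_eq)
  qed
qed

lemma prodGG:
  fixes c :: "'d::finite \<Rightarrow> real" and m :: "'d set"
  assumes "lam \<ge> 0"
  shows "(\<Prod>j\<in>UNIV. GG (lam * (if j \<in> m then 1 else 0)) 1 (c j))
       = exp (- lam * (\<Sum>j\<in>m. (c j)\<^sup>2) / (1 + 2 * lam)) / sqrt (1 + 2 * lam) ^ card m"
proof -
  have "(\<Prod>j\<in>UNIV. GG (lam * (if j \<in> m then 1 else 0)) 1 (c j))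
      = (\<Prod>j\<in>UNIV. if j \<in> m then GG lam 1 (c j) else 1)"
    by (intro prod.cong refl) (auto simp: GG_def)
  also have "\<dots> = (\<Prod>j\<in>m. GG lam 1 (c j))"
    by (simp add: prod.If_cases)
  also have "\<dots> = (\<Prod>j\<in>m. exp (- lam * (c j)\<^sup>2 / (1 + 2 * lam))) / (\<Prod>j\<in>m. sqrt (1 + 2 * lam))"
    unfolding GG_def by (simp add: prod_dividef)
  also have "\<dots> = exp (- lam * (\<Sum>j\<in>m. (c j)\<^sup>2) / (1 + 2 * lam)) / sqrt (1 + 2 * lam) ^ card m"
    by (simp add: exp_sum[symmetric] sum_divide_distrib sum_distrib_left)
  finally show ?thesis .
qed

lemma typeII:
  fixes \<theta> \<Delta> :: "real^'d::finite" and f :: "(nat \<Rightarrow> 'd \<Rightarrow> real) \<Rightarrow> real" and m :: "'d set"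
  assumes tau: "1 \<le> \<tau>" "\<tau> < n" and k: "card m \<ge> 1"
    and s: "s = sqrt (2 * real (card m))" and lam: "lam = 1 / s"
    and supp: "\<And>j. j \<notin> m \<Longrightarrow> \<Delta> $ j = 0" and r: "0 \<le> r" "r \<le> norm \<Delta>"
    and f: "\<And>\<xi>. 0 \<le> f \<xi>" "\<And>\<xi>. f \<xi> \<le> exp (lam * (t - (\<Sum>j\<in>UNIV. (if j \<in> m then 1 else 0) * (Zn n (obs \<theta> \<Delta> \<tau> \<xi>) \<tau> $ j)\<^sup>2)))"
  shows "integral\<^sup>L (noise_space n :: (nat \<Rightarrow> 'd \<Rightarrow> real) measure) f
     \<le> exp (1 / 2 + lam * (t - real (card m)) - r\<^sup>2 * real n * hfun n \<tau> / (s + 2))"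
proof -
  have spos: "s > 0" using s k by simp
  have lpos: "lam > 0" using lam spos by simp
  have "integral\<^sup>L (noise_space n :: (nat \<Rightarrow> 'd \<Rightarrow> real) measure) f
     \<le> exp (lam * t) * (\<Prod>j\<in>UNIV. GG (lam * (if j \<in> m then 1 else 0)) 1 (- kap n \<tau> * \<Delta> $ j))"
    by (rule chernoff[OF tau lpos _ f]) simp
  also have "\<dots> = exp (lam * t) * (exp (- lam * (\<Sum>j\<in>m. (- kap n \<tau> * \<Delta> $ j)\<^sup>2) / (1 + 2 * lam)) / sqrt (1 + 2 * lam) ^ card m)"
    using lpos by (simp add: prodGG)
  also have "\<dots> \<le> exp (1 / 2 + lam * (t - real (card m)) - r\<^sup>2 * real n * hfun n \<tau> / (s + 2))"
  proof (rule bound_ineq[OF k _ _ s lam])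
    show "0 \<le> r\<^sup>2 * real n * hfun n \<tau>"
      unfolding hfun_def using tau by (auto intro!: mult_nonneg_nonneg simp: divide_simps)
    have kk: "(kap n \<tau>)\<^sup>2 = real n * hfun n \<tau>"
      unfolding kap_def hfun_def using tau by (simp add: of_nat_diff field_simps)
    have nd: "(norm \<Delta>)\<^sup>2 = (\<Sum>j\<in>m. (\<Delta> $ j)\<^sup>2)"
    proof -
      have "(norm \<Delta>)\<^sup>2 = (\<Sum>j\<in>UNIV. (\<Delta> $ j)\<^sup>2)"
        unfolding norm_vec_def L2_set_def by (simp add: sum_nonneg)
      also have "\<dots> = (\<Sum>j\<in>m. (\<Delta> $ j)\<^sup>2)"
        using supp by (intro sum.mono_neutral_right) auto
      finally show ?thesis .
    qed
    have "(\<Sum>j\<in>m. (- kap n \<tau> * \<Delta> $ j)\<^sup>2) = (kap n \<tau>)\<^sup>2 * (norm \<Delta>)\<^sup>2"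
      unfolding nd by (simp add: sum_distrib_left power_mult_distrib)
    moreover have "r\<^sup>2 \<le> (norm \<Delta>)\<^sup>2" using r by (simp add: power_mono)
    moreover have "real n * hfun n \<tau> \<ge> 0" using kk[symmetric] by simp
    ultimately have "r\<^sup>2 * (real n * hfun n \<tau>) \<le> (\<Sum>j\<in>m. (- kap n \<tau> * \<Delta> $ j)\<^sup>2)"
      unfolding kk by (metis mult.commute mult_right_mono)
    then show "r\<^sup>2 * real n * hfun n \<tau> \<le> (\<Sum>j\<in>m. (- kap n \<tau> * \<Delta> $ j)\<^sup>2)"
      by (simp add: mult.assoc)
  qed
  finally show ?thesis .
qed

lemma norm2_vec: "(norm (x :: real^'d::finite))\<^sup>2 = (\<Sum>j\<in>UNIV. (x $ j)\<^sup>2)"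
  unfolding norm_vec_def L2_set_def by (simp add: sum_nonneg)

lemma sqrt_e: "sqrt (exp 1) = exp (1 / 2)"
proof -
  have "(exp (1 / 2 :: real))\<^sup>2 = exp 1" by (simp add: power2_eq_square exp_add[symmetric])
  then show ?thesis by (metis exp_ge_zero real_sqrt_unique)
qed

lemma Theta_ne:
  assumes "1 \<le> p" "p \<le> CARD('d::finite)" "r > 0"
  shows "Theta p r \<noteq> ({} :: (real^'d) set)"
proof -
  obtain m0 :: "'d set" where m0: "card m0 = p" "finite m0"
    using obtain_subset_with_card_n[of p "UNIV :: 'd set"] assms by auto
  then obtain j0 where j0: "j0 \<in> m0" using assms by (metis card.empty ex_in_conv not_one_le_zero)
  define \<epsilon> :: "'d \<Rightarrow> real" where "\<epsilon> j = (if j \<in> m0 then 1 else 0)" for j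
  define v :: "real^'d" where "v = (\<chi> j. r)"
  define D where "D = (\<chi> j. \<epsilon> j * v $ j)"
  have "(\<Sum>j\<in>UNIV. \<epsilon> j) = real p" unfolding \<epsilon>_def using m0 by (simp add: sum.If_cases)
  then have "D \<in> Vpd p" unfolding Vpd_def D_def
    by (intro CollectI exI[of _ v] exI[of _ \<epsilon>]) (auto simp: \<epsilon>_def)
  moreover have "norm D \<ge> r"
    using component_le_norm_cart[of D j0] j0 assms unfolding D_def \<epsilon>_def v_def by simp
  ultimately show ?thesis unfolding Theta_def by auto
qed

lemma Theta_supp:
  assumes "\<Delta> \<in> Theta p r"
  obtains m :: "'d::finite set" where "card m = p" "\<And>j. j \<notin> m \<Longrightarrow> \<Delta> $ j = 0" "r \<le> norm \<Delta>"
proof -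
  from assms obtain v \<epsilon> where D: "\<Delta> = (\<chi> j. \<epsilon> j * v $ j)" and e: "\<forall>j. \<epsilon> j \<in> {0, 1}"
    and se: "(\<Sum>j\<in>UNIV. \<epsilon> j) = real p" and nr: "r \<le> norm \<Delta>"
    unfolding Theta_def Vpd_def by auto
  define m where "m = {j. \<epsilon> j = 1}"
  have "(\<Sum>j\<in>UNIV. \<epsilon> j) = (\<Sum>j\<in>UNIV. if j \<in> m then 1 else 0)"
    using e unfolding m_def by (intro sum.cong refl) auto
  also have "\<dots> = real (card m)" by (simp add: sum.If_cases)
  finally have "card m = p" using se by simp
  moreover have "\<And>j. j \<notin> m \<Longrightarrow> \<Delta> $ j = 0" using e unfolding m_def D by auto
  ultimately show ?thesis using that nr by blast
qed

lemma alg3: "(T::real) > 0 \<Longrightarrow> s > 0 \<Longrightarrow> Q > 0 \<Longrightarrow> inverse Q * (A / (T * s)) * T = A / (Q * s)"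
  by (simp add: field_simps)

lemma ineq1:
  fixes s A0 H c1 :: real
  assumes s: "s \<ge> sqrt 2" and A0: "A0 \<ge> 0" and H: "H \<le> (sqrt 2 - 1 - c1) * A0 / s"
  shows "H - A0 / (s + 2) \<le> - c1 * A0 / s"
proof -
  have s2: "sqrt 2 > 0" "sqrt 2 * sqrt 2 = 2" by auto
  have spos: "s > 0" using s s2 by linarith
  have "(2 - sqrt 2) * sqrt 2 \<le> (2 - sqrt 2) * s"
    using s by (intro mult_left_mono) (auto simp: real_sqrt_le_iff[of 2 4, simplified])
  hence k: "(sqrt 2 - 1) * (s + 2) \<le> s" using s2 by (simp add: algebra_simps)
  have "(sqrt 2 - 1) * A0 / s \<le> A0 / (s + 2)"
  proof -
    have "(sqrt 2 - 1) * A0 * (s + 2) \<le> A0 * s" using mult_left_mono[OF k A0] by (simp add: algebra_simps)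
    then show ?thesis using spos by (simp add: field_simps)
  qed
  moreover have "(sqrt 2 - 1 - c1) * A0 / s = (sqrt 2 - 1) * A0 / s - c1 * A0 / s" by (simp add: diff_divide_distrib left_diff_distrib)
  ultimately show ?thesis using H by simp
qed

theorem mainTheorem6:
  fixes n p \<tau> :: nat and r :: real and \<theta> :: "real^'d::finite"
  assumes "n \<ge> 2" and "1 \<le> p" and "p \<le> CARD('d)"
    and "1 \<le> \<tau>" and "\<tau> \<le> n - 1" and "r > 0"
  shows "(\<forall>c1 H. 0 < c1 \<and> c1 < sqrt 2 - 1 \<and>
            H \<le> (sqrt 2 - 1 - c1) * r\<^sup>2 * real n * hfun n \<tau> / sqrt (2 * real CARD('d)) \<longrightarrow>
            beta n \<theta> (psi_lin H n \<tau>) (Theta p r) \<tau>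
              \<le> sqrt (exp 1) * exp (- c1 * r\<^sup>2 * real n * hfun n \<tau> / sqrt (2 * real CARD('d))))
       \<and> (\<forall>T. T > 0 \<longrightarrow>
            (let c2 = inverse (1 + sqrt (2 / real p)) * (r\<^sup>2 * real n * hfun n \<tau> / (T * sqrt (2 * real p)))
             in beta n \<theta> (psi_scan p T n \<tau>) (Theta p r :: (real^'d) set) \<tau>
                  \<le> sqrt (exp 1) * exp (- (c2 - 1) * T)))"
proof -
  have tau: "1 \<le> \<tau>" "\<tau> < n" using assms by auto
  have ne: "Theta p r \<noteq> ({} :: (real^'d) set)" using Theta_ne assms by blast
  define A0 where "A0 = r\<^sup>2 * real n * hfun n \<tau>"
  have psil: "psi_lin H n \<tau> X \<in> {0, 1}" for H X unfolding psi_lin_def by auto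
  have psis: "psi_scan p T n \<tau> X \<in> {0, 1}" for T X unfolding psi_scan_def by auto
  have part1: "beta n \<theta> (psi_lin H n \<tau>) (Theta p r) \<tau>
              \<le> sqrt (exp 1) * exp (- c1 * r\<^sup>2 * real n * hfun n \<tau> / sqrt (2 * real CARD('d)))"
    if c1: "0 < c1" "c1 < sqrt 2 - 1" and H: "H \<le> (sqrt 2 - 1 - c1) * r\<^sup>2 * real n * hfun n \<tau> / sqrt (2 * real CARD('d))"
    for c1 H
  proof -
    define s where "s = sqrt (2 * real CARD('d))"
    define lam where "lam = 1 / s"
    define t where "t = real CARD('d) + H * s"
    have spos: "s > 0" unfolding s_def by simp
    have lampos: "lam > 0" unfolding lam_def using spos by simp
    have s2: "s \<ge> sqrt 2" unfolding s_def by (simp add: real_sqrt_le_iff)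
    have A0nn: "A0 \<ge> 0" unfolding A0_def hfun_def using tau by (auto intro!: mult_nonneg_nonneg simp: divide_simps)
    show ?thesis
      unfolding beta_def
    proof (rule cSup_least)
      show "(\<lambda>\<Delta>. integral\<^sup>L (noise_space n) (\<lambda>\<xi>. 1 - psi_lin H n \<tau> (obs \<theta> \<Delta> \<tau> \<xi>))) ` Theta p r \<noteq> {}"
        using ne by simp
      fix x assume "x \<in> (\<lambda>\<Delta>. integral\<^sup>L (noise_space n) (\<lambda>\<xi>. 1 - psi_lin H n \<tau> (obs \<theta> \<Delta> \<tau> \<xi>))) ` Theta p r"
      then obtain \<Delta> where D: "\<Delta> \<in> Theta p r" and x: "x = integral\<^sup>L (noise_space n) (\<lambda>\<xi>. 1 - psi_lin H n \<tau> (obs \<theta> \<Delta> \<tau> \<xi>))"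
        by auto
      have nr: "r \<le> norm \<Delta>" using D unfolding Theta_def by auto
      have cU: "card (UNIV :: 'd set) \<ge> 1" by (simp add: Suc_leI)
      have "x \<le> exp (1 / 2 + lam * (t - real (card (UNIV :: 'd set))) - r\<^sup>2 * real n * hfun n \<tau> / (s + 2))"
        unfolding x
      proof (rule typeII[OF tau cU _ lam_def _ _ nr])
        show "s = sqrt (2 * real (card (UNIV :: 'd set)))" unfolding s_def by simp
        show "0 \<le> r" using assms by simp
        show "\<Delta> $ j = 0" if "j \<notin> UNIV" for j using that by simp
        fix \<xi> :: "nat \<Rightarrow> 'd \<Rightarrow> real"
        show "0 \<le> 1 - psi_lin H n \<tau> (obs \<theta> \<Delta> \<tau> \<xi>)" unfolding psi_lin_def by auto
        let ?Z = "Zn n (obs \<theta> \<Delta> \<tau> \<xi>) \<tau>"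
        show "1 - psi_lin H n \<tau> (obs \<theta> \<Delta> \<tau> \<xi>) \<le> exp (lam * (t - (\<Sum>j\<in>UNIV. (if j \<in> UNIV then 1 else 0) * (?Z $ j)\<^sup>2)))"
        proof (cases "L_lin n (obs \<theta> \<Delta> \<tau> \<xi>) \<tau> > H")
          case True
          then show ?thesis unfolding psi_lin_def by simp
        next
          case False
          then have "((norm ?Z)\<^sup>2 - real CARD('d)) / s \<le> H" unfolding L_lin_def s_def by simp
          then have "(norm ?Z)\<^sup>2 \<le> t" unfolding t_def using spos by (simp add: divide_le_eq algebra_simps)
          then have "0 \<le> lam * (t - (\<Sum>j\<in>UNIV. (if j \<in> UNIV then 1 else 0) * (?Z $ j)\<^sup>2))"
            using lampos unfolding norm2_vec by simp
          then show ?thesis unfolding psi_lin_def using False by simp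
        qed
      qed
      also have "lam * (t - real (card (UNIV :: 'd set))) = H" unfolding lam_def t_def using spos by simp
      also have "exp (1 / 2 + H - r\<^sup>2 * real n * hfun n \<tau> / (s + 2)) \<le> exp (1 / 2 - c1 * A0 / s)"
        using ineq1[OF s2 A0nn, of H c1] H unfolding A0_def s_def by (simp add: mult.assoc)
      also have "\<dots> = sqrt (exp 1) * exp (- c1 * r\<^sup>2 * real n * hfun n \<tau> / sqrt (2 * real CARD('d)))"
        unfolding sqrt_e A0_def s_def by (simp add: exp_add[symmetric] mult.assoc)
      finally show "x \<le> sqrt (exp 1) * exp (- c1 * r\<^sup>2 * real n * hfun n \<tau> / sqrt (2 * real CARD('d)))" .
    qed
  qed
  have part2: "beta n \<theta> (psi_scan p T n \<tau>) (Theta p r :: (real^'d) set) \<tau>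
                  \<le> sqrt (exp 1) * exp (- (c2 - 1) * T)"
    if T: "T > 0" and c2: "c2 = inverse (1 + sqrt (2 / real p)) * (r\<^sup>2 * real n * hfun n \<tau> / (T * sqrt (2 * real p)))"
    for T c2
  proof -
    define s where "s = sqrt (2 * real p)"
    define lam where "lam = 1 / s"
    define t where "t = real p + T * s"
    have spos: "s > 0" unfolding s_def using assms by simp
    have lampos: "lam > 0" unfolding lam_def using spos by simp
    have c2T: "c2 * T = A0 / (s + 2)"
    proof -
      have "sqrt (2 / real p) * s = 2" unfolding s_def using assms
        by (simp add: real_sqrt_mult[symmetric])
      then have "(1 + sqrt (2 / real p)) * s = s + 2" by (simp add: algebra_simps)
      moreover have "c2 * T = A0 / ((1 + sqrt (2 / real p)) * s)"
        unfolding c2 A0_def s_def[symmetric] by (rule alg3[OF T spos]) (simp add: add_pos_nonneg)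
      ultimately show ?thesis by simp
    qed
    show ?thesis
      unfolding beta_def
    proof (rule cSup_least)
      show "(\<lambda>\<Delta>. integral\<^sup>L (noise_space n) (\<lambda>\<xi>. 1 - psi_scan p T n \<tau> (obs \<theta> \<Delta> \<tau> \<xi>))) ` (Theta p r :: (real^'d) set) \<noteq> {}"
        using ne by simp
      fix x assume "x \<in> (\<lambda>\<Delta>. integral\<^sup>L (noise_space n) (\<lambda>\<xi>. 1 - psi_scan p T n \<tau> (obs \<theta> \<Delta> \<tau> \<xi>))) ` (Theta p r :: (real^'d) set)"
      then obtain \<Delta> :: "real^'d" where D: "\<Delta> \<in> Theta p r" and x: "x = integral\<^sup>L (noise_space n) (\<lambda>\<xi>. 1 - psi_scan p T n \<tau> (obs \<theta> \<Delta> \<tau> \<xi>))"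
        by auto
      obtain m :: "'d set" where m: "card m = p" "\<And>j. j \<notin> m \<Longrightarrow> \<Delta> $ j = 0" and nr: "r \<le> norm \<Delta>"
        using Theta_supp[OF D] by blast
      have cm: "card m \<ge> 1" using m assms by simp
      have "x \<le> exp (1 / 2 + lam * (t - real (card m)) - r\<^sup>2 * real n * hfun n \<tau> / (s + 2))"
        unfolding x
      proof (rule typeII[OF tau cm _ lam_def m(2) _ nr])
        show "s = sqrt (2 * real (card m))" unfolding s_def m by simp
        show "0 \<le> r" using assms by simp
        fix \<xi> :: "nat \<Rightarrow> 'd \<Rightarrow> real"
        show "0 \<le> 1 - psi_scan p T n \<tau> (obs \<theta> \<Delta> \<tau> \<xi>)" unfolding psi_scan_def by auto
        let ?Z = "Zn n (obs \<theta> \<Delta> \<tau> \<xi>) \<tau>"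
        show "1 - psi_scan p T n \<tau> (obs \<theta> \<Delta> \<tau> \<xi>) \<le> exp (lam * (t - (\<Sum>j\<in>UNIV. (if j \<in> m then 1 else 0) * (?Z $ j)\<^sup>2)))"
        proof (cases "L_scan p n (obs \<theta> \<Delta> \<tau> \<xi>) \<tau> > T")
          case True
          then show ?thesis unfolding psi_scan_def by simp
        next
          case False
          have "m \<in> Lfam p" unfolding Lfam_def using m by simp
          then have "((norm (Proj m ?Z))\<^sup>2 - real p) / sqrt (2 * real p) \<le> L_scan p n (obs \<theta> \<Delta> \<tau> \<xi>) \<tau>"
            unfolding L_scan_def by (intro Max_ge) auto
          with False have "((norm (Proj m ?Z))\<^sup>2 - real p) / s \<le> T" unfolding s_def by simp
          then have "(norm (Proj m ?Z))\<^sup>2 \<le> t" unfolding t_def using spos by (simp add: divide_le_eq algebra_simps)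
          moreover have "(norm (Proj m ?Z))\<^sup>2 = (\<Sum>j\<in>UNIV. (if j \<in> m then 1 else 0) * (?Z $ j)\<^sup>2)"
            unfolding norm2_vec Proj_def by (intro sum.cong refl) auto
          ultimately have "0 \<le> lam * (t - (\<Sum>j\<in>UNIV. (if j \<in> m then 1 else 0) * (?Z $ j)\<^sup>2))"
            using lampos by simp
          then show ?thesis unfolding psi_scan_def using False by simp
        qed
      qed
      also have "lam * (t - real (card m)) = T" unfolding lam_def t_def m using spos by simp
      also have "exp (1 / 2 + T - r\<^sup>2 * real n * hfun n \<tau> / (s + 2)) = sqrt (exp 1) * exp (- (c2 - 1) * T)"
        unfolding sqrt_e using c2T unfolding A0_def by (simp add: exp_add[symmetric] algebra_simps)
      finally show "x \<le> sqrt (exp 1) * exp (- (c2 - 1) * T)" .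
    qed
  qed
  show ?thesis using part1 part2 by (auto simp: Let_def)
qed

end
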